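(* Let $0<\eta<\eta'<1/4$, $\lambda=\mathrm{e}^{-1}+\eta$, $\ell=\lfloor1/\eta'\rfloor$, and $0<\delta_0<1$. Then there exists a positive integer $n_s=n_s(\delta_0,\eta')$ such that for all $n\ge n_s$ and all $\delta\ge\delta_0$ with $\delta n$ a positive integer, and every path $\pi$ of length $\delta n$ in $\mathcal W_n$, $$\mathbb{P}\big(E^\pi_{\eta',n}\,\big|\,A(\pi)\le\lambda\big)\le 2n\,\mathrm{e}^{-\delta n\eta'/16},$$ where $E^\pi_{\eta',n}$ is the event that $\Lambda_k>\lambda+\sqrt{\eta'}$ for some integer $1\le k\le\delta n/(2\ell)$.
   Context: $\mathcal W_n$ is the complete graph on $n$ vertices whose edges carry i.i.d. exponential weights with mean $n$; $A(\pi)$ denotes the average edge weight of a path $\pi$. For a path $\pi$ of length $\delta n$ let $X_1,\dots,X_{\delta n}$ be its successive edge weights, $S_k=\sum_{i=1}^kX_i$, and $\Lambda_k=(S_{\delta n}-S_{(k-1)\ell})/(\delta n-(k-1)\ell)$. *)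

theory Defs
  imports "HOL-Probability.Probability"
begin

definition Kedges :: "nat \<Rightarrow> nat set set" where
  "Kedges n = {{u, v} | u v. u < n \<and> v < n \<and> u \<noteq> v}"

text \<open>The weighted complete graph W_n: i.i.d. exponential edge weights with mean n
  (rate 1/n), as a product probability measure over the edges.\<close>
definition Wn :: "nat \<Rightarrow> (nat set \<Rightarrow> real) measure" where
  "Wn n = PiM (Kedges n) (\<lambda>_. density lborel (\<lambda>x. ennreal (exponential_density (1 / real n) x)))"

definition is_path :: "nat \<Rightarrow> nat \<Rightarrow> nat list \<Rightarrow> bool" where
  "is_path n m vs \<longleftrightarrow> length vs = m + 1 \<and> distinct vs \<and> (\<forall>v\<in>set vs. v < n)"

definition pathX :: "nat list \<Rightarrow> (nat set \<Rightarrow> real) \<Rightarrow> nat \<Rightarrow> real" where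
  "pathX vs w i = w {vs ! (i - 1), vs ! i}"

definition pathS :: "nat list \<Rightarrow> (nat set \<Rightarrow> real) \<Rightarrow> nat \<Rightarrow> real" where
  "pathS vs w k = (\<Sum>i = 1..k. pathX vs w i)"

definition avgW :: "nat list \<Rightarrow> nat \<Rightarrow> (nat set \<Rightarrow> real) \<Rightarrow> real" where
  "avgW vs m w = pathS vs w m / real m"

definition LambdaK :: "nat list \<Rightarrow> nat \<Rightarrow> nat \<Rightarrow> (nat set \<Rightarrow> real) \<Rightarrow> nat \<Rightarrow> real" where
  "LambdaK vs m l w k =
     (pathS vs w m - pathS vs w ((k - 1) * l)) / (real m - real ((k - 1) * l))"

end

theory Submission
  imports Defs
begin


definition expM :: "real \<Rightarrow> real measure" where
  "expM r = density lborel (\<lambda>x. ennreal (exponential_density r x))"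

lemma sets_expM[simp, measurable_cong]: "sets (expM r) = sets borel"
  by (simp add: expM_def)

lemma space_expM[simp]: "space (expM r) = UNIV"
  by (simp add: expM_def)

lemma prob_space_expM: "0 < r \<Longrightarrow> prob_space (expM r)"
  unfolding expM_def by (rule prob_space_exponential_density)

lemma distr_scale_exp:
  assumes r: "0 < r" and c: "0 < c"
  shows "distr (expM r) borel (\<lambda>x. x / c) = density (expM r) (\<lambda>x. ennreal (c * exp (-(c-1)*x*r)))"
proof (rule measure_eqI)
  fix B assume B: "B \<in> sets (distr (expM r) borel (\<lambda>x. x / c))"
  hence B[measurable]: "B \<in> sets borel" by simp
  have "emeasure (distr (expM r) borel (\<lambda>x. x / c)) B
      = (\<integral>\<^sup>+ x. ennreal (exponential_density r x) * indicator B (x / c) \<partial>lborel)"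
  proof -
    have m: "(\<lambda>x. x / c) -` B \<inter> space (expM r) \<in> sets (expM r)" by measurable
    have "emeasure (distr (expM r) borel (\<lambda>x. x / c)) B = emeasure (expM r) ((\<lambda>x. x / c) -` B \<inter> space (expM r))"
      by (rule emeasure_distr) auto
    also have "\<dots> = (\<integral>\<^sup>+ x. ennreal (exponential_density r x) * indicator ((\<lambda>x. x / c) -` B \<inter> space (expM r)) x \<partial>lborel)"
      unfolding expM_def by (rule emeasure_density) (use m in \<open>auto simp: expM_def\<close>)
    also have "\<dots> = (\<integral>\<^sup>+ x. ennreal (exponential_density r x) * indicator B (x / c) \<partial>lborel)"
      by (intro nn_integral_cong) (auto simp: indicator_def)
    finally show ?thesis .
  qed
  also have "\<dots> = ennreal \<bar>c\<bar> * (\<integral>\<^sup>+ y. ennreal (exponential_density r (0 + c*y)) * indicator B ((0 + c*y) / c) \<partial>lborel)"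
    by (rule nn_integral_real_affine) (use c in auto)
  also have "\<dots> = (\<integral>\<^sup>+ y. ennreal (exponential_density r y) * (ennreal (c * exp (-(c-1)*y*r)) * indicator B y) \<partial>lborel)"
  proof -
    have "ennreal \<bar>c\<bar> * (ennreal (exponential_density r (0 + c*y)) * indicator B ((0 + c*y) / c))
       = ennreal (exponential_density r y) * (ennreal (c * exp (-(c-1)*y*r)) * indicator B y)" for y
    proof (cases "y < 0")
      case True thus ?thesis using c by (simp add: exponential_density_def mult_pos_neg)
    next
      case False
      have "\<bar>c\<bar> * (r * exp (- (c * y) * r)) = r * exp (- y * r) * (c * exp (-(c-1)*y*r))"
        using c by (simp add: exp_add[symmetric] algebra_simps)
      moreover have "\<not> c * y < 0" using False c by (simp add: not_less)
      ultimately show ?thesis using False c r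
        by (auto simp: exponential_density_def ennreal_mult'[symmetric] mult.assoc[symmetric]
             indicator_def ennreal_mult[symmetric] zero_le_mult_iff)
    qed
    thus ?thesis by (simp add: nn_integral_cmult[symmetric])
  qed
  also have "\<dots> = emeasure (density (expM r) (\<lambda>x. ennreal (c * exp (-(c-1)*x*r)))) B"
    by (simp add: emeasure_density expM_def nn_integral_density)
  finally show "emeasure (distr (expM r) borel (\<lambda>x. x / c)) B = emeasure (density (expM r) (\<lambda>x. ennreal (c * exp (-(c-1)*x*r)))) B" .
qed simp





lemma distr_PiM_scale:
  fixes I :: "'i set" and c :: "'i \<Rightarrow> real"
  assumes I: "finite I" and r: "0 < r" and c: "\<And>i. i \<in> I \<Longrightarrow> 0 < c i"
  shows "distr (PiM I (\<lambda>_. expM r)) (PiM I (\<lambda>_. expM r)) (\<lambda>w. \<lambda>i\<in>I. w i / c i)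
       = density (PiM I (\<lambda>_. expM r)) (\<lambda>w. \<Prod>i\<in>I. ennreal (c i * exp (-(c i - 1) * w i * r)))"
    (is "?D = ?Q")
proof -
  interpret F: finite_product_prob_space "\<lambda>_. expM r" I
    by (simp add: finite_product_prob_space_def finite_product_sigma_finite_def product_prob_space_def
        product_sigma_finite_def prob_space_imp_sigma_finite prob_space_expM r I
        product_prob_space_axioms_def finite_product_sigma_finite_axioms_def)
  let ?W = "PiM I (\<lambda>_. expM r)"
  have meas[measurable]: "(\<lambda>w. \<lambda>i\<in>I. w i / c i) \<in> measurable ?W ?W"
    by measurable
  show ?thesis
  proof (rule measure_eqI_PiM_finite[where M="\<lambda>_. expM r" and I=I and A="\<lambda>_. space ?W"])
    show "sets ?D = sets ?W" by simp
    show "sets ?Q = sets ?W" by simp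
    show "range (\<lambda>_. space ?W) \<subseteq> prod_algebra I (\<lambda>_. expM r)"
      using space_in_prod_algebra[of I "\<lambda>_. expM r"] by (auto simp: space_PiM)
    show "(\<Union>i::nat. space ?W) = space ?W" by simp
    show "emeasure ?D (space ?W) \<noteq> \<infinity>" for i::nat
      by (simp add: emeasure_distr)
  next
    fix A assume A: "\<And>i. i \<in> I \<Longrightarrow> A i \<in> sets (expM r)"
    have A'[measurable]: "i \<in> I \<Longrightarrow> A i \<in> sets borel" for i using A by simp
    have "emeasure ?D (Pi\<^sub>E I A) = emeasure ?W ((\<lambda>w. \<lambda>i\<in>I. w i / c i) -` Pi\<^sub>E I A \<inter> space ?W)"
      by (rule emeasure_distr[OF meas]) (auto intro!: sets_PiM_I_finite A simp: I)
    also have "(\<lambda>w. \<lambda>i\<in>I. w i / c i) -` Pi\<^sub>E I A \<inter> space ?W = Pi\<^sub>E I (\<lambda>i. (\<lambda>x. x / c i) -` A i)"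
      by (auto simp: space_PiM PiE_def Pi_def)
    also have "emeasure ?W \<dots> = (\<Prod>i\<in>I. emeasure (expM r) ((\<lambda>x. x / c i) -` A i))"
    proof (rule F.measure_times)
      fix i assume "i \<in> I"
      hence [measurable]: "A i \<in> sets borel" by (rule A')
      show "(\<lambda>x. x / c i) -` A i \<in> sets (expM r)"
        using measurable_sets_borel[of "\<lambda>x. x / c i" borel "A i"] by simp
    qed
    also have "\<dots> = (\<Prod>i\<in>I. emeasure (density (expM r) (\<lambda>x. ennreal (c i * exp (-(c i - 1)*x*r)))) (A i))"
    proof (rule prod.cong[OF refl])
      fix i assume i: "i \<in> I"
      have "emeasure (expM r) ((\<lambda>x. x / c i) -` A i) = emeasure (distr (expM r) borel (\<lambda>x. x / c i)) (A i)"
        using i by (subst emeasure_distr) auto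
      also have "\<dots> = emeasure (density (expM r) (\<lambda>x. ennreal (c i * exp (-(c i - 1)*x*r)))) (A i)"
        using distr_scale_exp[OF r c[OF i]] by simp
      finally show "emeasure (expM r) ((\<lambda>x. x / c i) -` A i) = \<dots>" .
    qed
    also have "\<dots> = (\<Prod>i\<in>I. \<integral>\<^sup>+ x. ennreal (c i * exp (-(c i - 1)*x*r)) * indicator (A i) x \<partial>expM r)"
      using A by (intro prod.cong refl emeasure_density) auto
    also have "\<dots> = (\<integral>\<^sup>+ w. (\<Prod>i\<in>I. ennreal (c i * exp (-(c i - 1)*w i*r)) * indicator (A i) (w i)) \<partial>?W)"
      by (rule F.product_nn_integral_prod[symmetric]) (auto simp: I)
    also have "\<dots> = (\<integral>\<^sup>+ w. (\<Prod>i\<in>I. ennreal (c i * exp (-(c i - 1)*w i*r))) * indicator (Pi\<^sub>E I A) w \<partial>?W)"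
    proof (rule nn_integral_cong)
      fix w assume "w \<in> space ?W"
      hence "w \<in> extensional I" by (auto simp: space_PiM PiE_def)
      hence "indicator (Pi\<^sub>E I A) w = (\<Prod>i\<in>I. indicator (A i) (w i) :: ennreal)"
        using I by (auto simp: indicator_def PiE_def Pi_def prod.neutral)
      thus "(\<Prod>i\<in>I. ennreal (c i * exp (-(c i - 1)*w i*r)) * indicator (A i) (w i))
          = (\<Prod>i\<in>I. ennreal (c i * exp (-(c i - 1)*w i*r))) * indicator (Pi\<^sub>E I A) w"
        by (simp add: prod.distrib)
    qed
    also have "\<dots> = emeasure ?Q (Pi\<^sub>E I A)"
      by (rule emeasure_density[symmetric]) (auto intro!: sets_PiM_I_finite A simp: I)
    finally show "emeasure ?D (Pi\<^sub>E I A) = emeasure ?Q (Pi\<^sub>E I A)" .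
  qed (simp add: I)
qed


lemma scale_ineq:
  fixes I :: "'i set" and c :: "'i \<Rightarrow> real"
  assumes I: "finite I" and r: "0 < r" and c: "\<And>i. i \<in> I \<Longrightarrow> 0 < c i"
    and A[measurable]: "A \<in> sets (PiM I (\<lambda>_. expM r))" and B[measurable]: "B \<in> sets (PiM I (\<lambda>_. expM r))"
    and hA: "\<And>w. w \<in> A \<Longrightarrow> (\<Sum>i\<in>I. (c i - 1) * w i) \<le> 0"
    and hB: "\<And>w. w \<in> A \<Longrightarrow> (\<lambda>i\<in>I. c i * w i) \<in> B"
  shows "(\<Prod>i\<in>I. c i) * measure (PiM I (\<lambda>_. expM r)) A \<le> measure (PiM I (\<lambda>_. expM r)) B"
proof -
  interpret F: finite_product_prob_space "\<lambda>_. expM r" I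
    by (simp add: finite_product_prob_space_def finite_product_sigma_finite_def product_prob_space_def
        product_sigma_finite_def prob_space_imp_sigma_finite prob_space_expM r I
        product_prob_space_axioms_def finite_product_sigma_finite_axioms_def)
  let ?W = "PiM I (\<lambda>_. expM r)"
  let ?t = "\<lambda>w. \<lambda>i\<in>I. w i / c i"
  let ?J = "\<Prod>i\<in>I. c i"
  have Jpos: "0 < ?J" using c by (simp add: prod_pos)
  have meas[measurable]: "?t \<in> measurable ?W ?W"
    by measurable
  have sub: "?t -` A \<inter> space ?W \<subseteq> B"
  proof
    fix v assume v: "v \<in> ?t -` A \<inter> space ?W"
    hence "?t v \<in> A" by simp
    hence "(\<lambda>i\<in>I. c i * (?t v) i) \<in> B" by (rule hB)
    moreover have "(\<lambda>i\<in>I. c i * (?t v) i) = v"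
    proof
      fix i show "(\<lambda>i\<in>I. c i * (?t v) i) i = v i"
        using v c[of i] by (cases "i \<in> I") (auto simp: space_PiM PiE_def extensional_def)
    qed
    ultimately show "v \<in> B" by simp
  qed
  have "ennreal ?J * emeasure ?W A = (\<integral>\<^sup>+ w. ennreal ?J * indicator A w \<partial>?W)"
    by (simp add: nn_integral_cmult)
  also have "\<dots> \<le> (\<integral>\<^sup>+ w. (\<Prod>i\<in>I. ennreal (c i * exp (-(c i - 1) * w i * r))) * indicator A w \<partial>?W)"
  proof (rule nn_integral_mono)
    fix w assume "w \<in> space ?W"
    show "ennreal ?J * indicator A w \<le> (\<Prod>i\<in>I. ennreal (c i * exp (-(c i - 1) * w i * r))) * indicator A w"
    proof (cases "w \<in> A")
      case True
      have "(\<Prod>i\<in>I. ennreal (c i * exp (-(c i - 1) * w i * r))) = ennreal (\<Prod>i\<in>I. c i * exp (-(c i - 1) * w i * r))"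
        using c by (intro prod_ennreal) (auto intro: less_imp_le)
      also have "(\<Prod>i\<in>I. c i * exp (-(c i - 1) * w i * r)) = ?J * exp (- r * (\<Sum>i\<in>I. (c i - 1) * w i))"
      proof -
        have "(\<Prod>i\<in>I. c i * exp (-(c i - 1) * w i * r)) = ?J * (\<Prod>i\<in>I. exp (-(c i - 1) * w i * r))"
          by (simp add: prod.distrib)
        also have "(\<Prod>i\<in>I. exp (-(c i - 1) * w i * r)) = exp (\<Sum>i\<in>I. -(c i - 1) * w i * r)"
          using I by (simp add: exp_sum)
        also have "(\<Sum>i\<in>I. -(c i - 1) * w i * r) = - r * (\<Sum>i\<in>I. (c i - 1) * w i)"
          by (simp add: sum_distrib_left sum_negf algebra_simps)
        finally show ?thesis .
      qed
      finally have eq: "(\<Prod>i\<in>I. ennreal (c i * exp (-(c i - 1) * w i * r))) = ennreal (?J * exp (- r * (\<Sum>i\<in>I. (c i - 1) * w i)))" .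
      have "0 \<le> - r * (\<Sum>i\<in>I. (c i - 1) * w i)" using hA[OF True] r by (simp add: mult_nonneg_nonpos)
      hence "1 \<le> exp (- r * (\<Sum>i\<in>I. (c i - 1) * w i))" by simp
      hence "?J \<le> ?J * exp (- r * (\<Sum>i\<in>I. (c i - 1) * w i))" using Jpos by simp
      thus ?thesis using True eq by (simp add: ennreal_leI)
    qed simp
  qed
  also have "\<dots> = emeasure (density ?W (\<lambda>w. \<Prod>i\<in>I. ennreal (c i * exp (-(c i - 1) * w i * r)))) A"
    by (rule emeasure_density[symmetric]) auto
  also have "\<dots> = emeasure (distr ?W ?W ?t) A"
    using distr_PiM_scale[OF I r c] by simp
  also have "\<dots> = emeasure ?W (?t -` A \<inter> space ?W)"
    by (rule emeasure_distr) auto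
  also have "\<dots> \<le> emeasure ?W B"
    using sub by (intro emeasure_mono) auto
  finally have "ennreal ?J * ennreal (measure ?W A) \<le> ennreal (measure ?W B)"
    by (simp add: F.emeasure_eq_measure)
  thus ?thesis using Jpos
    by (simp add: ennreal_mult'[symmetric] ennreal_le_iff)
qed




lemma finite_Kedges: "finite (Kedges n)"
proof -
  have "Kedges n \<subseteq> (\<lambda>(u,v). {u,v}) ` ({..<n} \<times> {..<n})"
    by (auto simp: Kedges_def)
  thus ?thesis by (rule finite_subset) auto
qed

lemma Wn_eq: "Wn n = PiM (Kedges n) (\<lambda>_. expM (1 / real n))"
  by (simp add: Wn_def expM_def)

definition ed :: "nat list \<Rightarrow> nat \<Rightarrow> nat set" where
  "ed vs i = {vs ! (i - 1), vs ! i}"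

lemma pathX_ed: "pathX vs w i = w (ed vs i)"
  by (simp add: pathX_def ed_def)

lemma ed_in:
  assumes "is_path n m vs" "1 \<le> i" "i \<le> m"
  shows "ed vs i \<in> Kedges n"
proof -
  have l: "length vs = m + 1" "distinct vs" "\<forall>v\<in>set vs. v < n" using assms(1) by (auto simp: is_path_def)
  have "vs ! (i - 1) \<noteq> vs ! i" using l assms by (simp add: nth_eq_iff_index_eq)
  moreover have "vs ! (i - 1) < n" "vs ! i < n" using l assms by auto
  ultimately show ?thesis unfolding Kedges_def ed_def by blast
qed

lemma ed_inj:
  assumes "is_path n m vs"
  shows "inj_on (ed vs) {1..m}"
proof
  fix i j assume i: "i \<in> {1..m}" and j: "j \<in> {1..m}" and e: "ed vs i = ed vs j"
  have l: "length vs = m + 1" "distinct vs" using assms by (auto simp: is_path_def)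
  have eq: "\<And>p q. p \<le> m \<Longrightarrow> q \<le> m \<Longrightarrow> vs ! p = vs ! q \<longleftrightarrow> p = q"
    using l by (simp add: nth_eq_iff_index_eq)
  from e have "(vs!(i-1) = vs!(j-1) \<and> vs!i = vs!j) \<or> (vs!(i-1) = vs!j \<and> vs!i = vs!(j-1))"
    unfolding ed_def by (simp add: doubleton_eq_iff)
  thus "i = j"
  proof
    assume "vs!(i-1) = vs!(j-1) \<and> vs!i = vs!j" thus ?thesis using eq i j by auto
  next
    assume h: "vs!(i-1) = vs!j \<and> vs!i = vs!(j-1)"
    hence "i - 1 = j" "i = j - 1" using eq i j by auto
    thus ?thesis using i j by auto
  qed
qed

lemma comp_meas:
  assumes "e \<in> I"
  shows "(\<lambda>w. w e) \<in> borel_measurable (PiM I (\<lambda>_. expM r))"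
  using measurable_component_singleton[of e I "\<lambda>_. expM r", OF assms]
  by (simp add: measurable_cong_sets[OF refl sets_expM])

lemma pathS_ed: "pathS vs w k = (\<Sum>i=1..k. w (ed vs i))"
  by (simp add: pathS_def pathX_ed)

lemma pathS_meas:
  assumes "is_path n m vs" "k \<le> m"
  shows "(\<lambda>w. pathS vs w k) \<in> borel_measurable (PiM (Kedges n) (\<lambda>_. expM r))"
  unfolding pathS_ed
  by (rule borel_measurable_sum) (rule comp_meas, rule ed_in[OF assms(1)], use assms in auto)


lemma split_1m:
  fixes g :: "nat \<Rightarrow> 'a::comm_monoid_add"
  assumes "a \<le> m"
  shows "(\<Sum>i=1..m. g i) = (\<Sum>i=1..a. g i) + (\<Sum>i\<in>{a+1..m}. g i)"
proof -
  have "{1..m} = {1..a} \<union> {a+1..m}" using assms by auto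
  thus ?thesis by (simp add: sum.union_disjoint)
qed

lemma split_1m_prod:
  fixes g :: "nat \<Rightarrow> 'a::comm_monoid_mult"
  assumes "a \<le> m"
  shows "(\<Prod>i=1..m. g i) = (\<Prod>i=1..a. g i) * (\<Prod>i\<in>{a+1..m}. g i)"
proof -
  have "{1..m} = {1..a} \<union> {a+1..m}" using assms by auto
  thus ?thesis by (simp add: prod.union_disjoint)
qed

lemma path_scale:
  fixes n m a :: nat and C D lam :: real
  assumes path: "is_path n m vs" and m: "0 < m" and a: "a \<le> m" and n: "0 < n"
    and C: "0 < C" and D: "0 < D"
    and A: "A \<in> sets (Wn n)"
    and AF: "\<And>w. w \<in> A \<Longrightarrow> w \<in> space (Wn n) \<and> avgW vs m w \<le> lam"
    and H: "\<And>w. w \<in> A \<Longrightarrow> (C-1) * pathS vs w a + (D-1) * (pathS vs w m - pathS vs w a) \<le> 0"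
  shows "C^a * D^(m-a) * measure (Wn n) A \<le> measure (Wn n) {w \<in> space (Wn n). avgW vs m w \<le> lam}"
proof -
  define I where "I = Kedges n"
  define r where "r = 1 / real n"
  have r: "0 < r" using n by (simp add: r_def)
  have W: "Wn n = PiM I (\<lambda>_. expM r)" by (simp add: Wn_eq I_def r_def)
  define c where "c e = (if e \<in> ed vs ` {1..a} then C else if e \<in> ed vs ` {1..m} then D else 1)" for e
  have inj: "inj_on (ed vs) {1..m}" by (rule ed_inj[OF path])
  have sub: "ed vs ` {1..m} \<subseteq> I" using ed_in[OF path] by (auto simp: I_def)
  have cH: "c (ed vs i) = C" if "i \<in> {1..a}" for i using that by (simp add: c_def)
  have cT: "c (ed vs i) = D" if "i \<in> {a+1..m}" for i
  proof -
    have "ed vs i \<notin> ed vs ` {1..a}"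
    proof
      assume "ed vs i \<in> ed vs ` {1..a}"
      then obtain j where "j \<in> {1..a}" "ed vs i = ed vs j" by auto
      hence "i = j" using inj_onD[OF inj] that a by auto
      thus False using that \<open>j \<in> {1..a}\<close> by auto
    qed
    thus ?thesis using that by (simp add: c_def)
  qed
  have c0: "c e = 1" if "e \<notin> ed vs ` {1..m}" for e using that a by (auto simp: c_def)
  have cpos: "0 < c e" for e using C D by (simp add: c_def)
  have sumI: "(\<Sum>e\<in>I. g e) = (\<Sum>i=1..m. g (ed vs i))" if "\<And>e. e \<notin> ed vs ` {1..m} \<Longrightarrow> g e = 0"
    for g :: "nat set \<Rightarrow> real"
  proof -
    have "(\<Sum>e\<in>I. g e) = (\<Sum>e\<in>ed vs ` {1..m}. g e)"
      using that sub finite_Kedges by (intro sum.mono_neutral_right) (auto simp: I_def)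
    also have "\<dots> = (\<Sum>i=1..m. g (ed vs i))" by (rule sum.reindex[OF inj, unfolded o_def])
    finally show ?thesis .
  qed
  have prodI: "(\<Prod>e\<in>I. c e) = C^a * D^(m-a)"
  proof -
    have "(\<Prod>e\<in>I. c e) = (\<Prod>e\<in>ed vs ` {1..m}. c e)"
      using c0 sub finite_Kedges by (intro prod.mono_neutral_right) (auto simp: I_def)
    also have "\<dots> = (\<Prod>i=1..m. c (ed vs i))" by (rule prod.reindex[OF inj, unfolded o_def])
    also have "\<dots> = (\<Prod>i=1..a. c (ed vs i)) * (\<Prod>i\<in>{a+1..m}. c (ed vs i))" by (rule split_1m_prod[OF a])
    also have "\<dots> = (\<Prod>i=1..a. C) * (\<Prod>i\<in>{a+1..m}. D)"
      using cH cT by simp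
    also have "\<dots> = C^a * D^(m-a)" by simp
    finally show ?thesis .
  qed
  have keysum: "(\<Sum>i=1..m. (c (ed vs i) - 1) * w (ed vs i)) = (C-1) * pathS vs w a + (D-1) * (pathS vs w m - pathS vs w a)" for w
  proof -
    have "(\<Sum>i=1..m. (c (ed vs i) - 1) * w (ed vs i)) = (\<Sum>i=1..a. (c (ed vs i) - 1) * w (ed vs i)) + (\<Sum>i\<in>{a+1..m}. (c (ed vs i) - 1) * w (ed vs i))"
      by (rule split_1m[OF a])
    also have "\<dots> = (\<Sum>i=1..a. (C - 1) * w (ed vs i)) + (\<Sum>i\<in>{a+1..m}. (D - 1) * w (ed vs i))"
      using cH cT by simp
    also have "\<dots> = (C-1) * pathS vs w a + (D-1) * (\<Sum>i\<in>{a+1..m}. w (ed vs i))"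
      by (simp add: pathS_ed sum_distrib_left)
    also have "(\<Sum>i\<in>{a+1..m}. w (ed vs i)) = pathS vs w m - pathS vs w a"
      using split_1m[OF a, of "\<lambda>i. w (ed vs i)"] by (simp add: pathS_ed)
    finally show ?thesis .
  qed
  have [measurable]: "(\<lambda>w. pathS vs w m) \<in> borel_measurable (PiM I (\<lambda>_. expM r))"
    unfolding I_def by (rule pathS_meas[OF path]) simp
  have Fm: "{w \<in> space (PiM I (\<lambda>_. expM r)). avgW vs m w \<le> lam} \<in> sets (PiM I (\<lambda>_. expM r))"
    unfolding avgW_def by measurable
  have "(\<Prod>e\<in>I. c e) * measure (PiM I (\<lambda>_. expM r)) A \<le> measure (PiM I (\<lambda>_. expM r)) {w \<in> space (PiM I (\<lambda>_. expM r)). avgW vs m w \<le> lam}"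
  proof (rule scale_ineq[OF _ r])
    show "finite I" by (simp add: I_def finite_Kedges)
    show "0 < c i" for i by (rule cpos)
    show "A \<in> sets (PiM I (\<lambda>_. expM r))" using A W by simp
    show "{w \<in> space (PiM I (\<lambda>_. expM r)). avgW vs m w \<le> lam} \<in> sets (PiM I (\<lambda>_. expM r))" by (rule Fm)
  next
    fix w assume w: "w \<in> A"
    have "(\<Sum>e\<in>I. (c e - 1) * w e) = (\<Sum>i=1..m. (c (ed vs i) - 1) * w (ed vs i))"
      by (rule sumI) (simp add: c0)
    thus "(\<Sum>e\<in>I. (c e - 1) * w e) \<le> 0" using H[OF w] keysum by simp
  next
    fix w assume w: "w \<in> A"
    have sp: "(\<lambda>e\<in>I. c e * w e) \<in> space (PiM I (\<lambda>_. expM r))" by (simp add: space_PiM)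
    have "pathS vs (\<lambda>e\<in>I. c e * w e) m = (\<Sum>i=1..m. c (ed vs i) * w (ed vs i))"
      using sub by (auto simp: pathS_ed intro!: sum.cong)
    also have "\<dots> = pathS vs w m + (\<Sum>i=1..m. (c (ed vs i) - 1) * w (ed vs i))"
      by (simp add: pathS_ed algebra_simps sum.distrib sum_subtractf)
    also have "\<dots> \<le> pathS vs w m" using H[OF w] keysum by simp
    finally have "avgW vs m (\<lambda>e\<in>I. c e * w e) \<le> avgW vs m w"
      unfolding avgW_def using m by (simp add: divide_right_mono)
    thus "(\<lambda>e\<in>I. c e * w e) \<in> {w \<in> space (PiM I (\<lambda>_. expM r)). avgW vs m w \<le> lam}"
      using sp AF[OF w] by simp
  qed
  thus ?thesis using prodI W by simp
qed




lemma C_case1: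
  fixes x :: real assumes "0 < x" "x < 1"
  shows "exp (x * real a) \<le> (1 / (1 - x)) ^ a"
proof -
  have "1 - x \<le> exp (-x)" using exp_ge_add_one_self[of "-x"] by simp
  hence "(1 - x) * exp x \<le> 1" by (simp add: exp_minus divide_simps)
  hence "exp x \<le> 1 / (1 - x)" using assms by (simp add: divide_simps mult.commute)
  hence "exp x ^ a \<le> (1 / (1 - x)) ^ a" by (rule power_mono) simp
  moreover have "exp (x * real a) = exp x ^ a" by (simp add: exp_of_nat2_mult)
  ultimately show ?thesis by simp
qed

lemma expu:
  fixes u :: real assumes u0: "0 \<le> u" and u1: "u \<le> 3/2"
  shows "(1 + u) * exp (u\<^sup>2 / 10) \<le> exp u"
proof -
  define y where "y = u - u\<^sup>2/10"
  have uu: "u * u \<le> (3/2) * u" by (rule mult_right_mono[OF u1 u0])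
  have y1: "y \<ge> u * (17/20)" using uu unfolding y_def power2_eq_square by linarith
  have y0: "0 \<le> y" using y1 u0 by linarith
  have "(u * (17/20)) * (u * (17/20)) \<le> y * y" using y1 u0 by (intro mult_mono) auto
  hence yy: "u * u / 5 \<le> y * y" using mult_nonneg_nonneg[OF u0 u0] by linarith
  have "u = y + u * u / 10" by (simp add: y_def power2_eq_square)
  hence "1 + u \<le> 1 + y + y\<^sup>2/2" using yy unfolding power2_eq_square by linarith
  also have "\<dots> \<le> exp y" by (rule exp_lower_Taylor_quadratic[OF y0])
  finally have "(1 + u) * exp (u\<^sup>2 / 10) \<le> exp y * exp (u\<^sup>2 / 10)"
    by (simp add: mult_right_mono)
  also have "\<dots> = exp u" by (simp add: y_def exp_add[symmetric])
  finally show ?thesis .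
qed




lemma J_bound:
  fixes lam s :: real and a j :: nat
  assumes lam: "1/3 \<le> lam" and s: "0 < s" "s \<le> 1/2" and h: "lam * a - s * j > 0"
  shows "exp (real j * (s/lam)\<^sup>2 / 10) \<le> (lam*a/(lam*a - s*j))^a * (lam/(lam+s))^j"
proof -
  define u where "u = s / lam"
  have lam0: "0 < lam" using lam by simp
  have u0: "0 \<le> u" using s lam0 by (simp add: u_def)
  have u1: "u \<le> 3/2"
  proof -
    have "s \<le> 3/2 * lam" using s lam by linarith
    thus ?thesis using lam0 by (simp add: u_def divide_simps)
  qed
  have a0: "0 < real a" using h s lam0
    by (metis add.commute diff_add_cancel less_add_same_cancel2 linorder_neqE_linordered_idom mult_eq_0_iff of_nat_0_le_iff of_nat_le_0_iff mult_nonneg_nonneg less_le_not_le)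
  define x where "x = s * j / (lam * a)"
  have x0: "0 \<le> x" using s lam0 a0 by (simp add: x_def)
  have x1: "x < 1" using h lam0 a0 by (simp add: x_def divide_simps)
  have Ceq: "lam*a/(lam*a - s*j) = 1 / (1 - x)" using lam0 a0 h by (simp add: x_def divide_simps)
  have xa: "x * real a = real j * u" using lam0 a0 by (simp add: x_def u_def)
  have C: "exp (real j * u) \<le> (lam*a/(lam*a - s*j))^a"
  proof (cases "x = 0")
    case True
    hence "real j * u = 0" using xa by simp
    hence e: "exp (real j * u) = 1" by simp
    have "1 \<le> (lam*a/(lam*a - s*j))" using h s lam0 a0 by (simp add: divide_simps)
    hence p: "1 \<le> (lam*a/(lam*a - s*j))^a" by (rule one_le_power)
    show ?thesis unfolding e by (rule p)
  next
    case False
    thus ?thesis using C_case1[of x a] x0 x1 Ceq xa by simp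
  qed
  have Deq: "lam/(lam+s) = 1 / (1 + u)" using lam0 s by (simp add: u_def divide_simps)
  have "exp (real j * u\<^sup>2 / 10) = exp (u\<^sup>2/10) ^ j" by (simp add: exp_of_nat_mult[symmetric] mult.commute)
  also have "\<dots> \<le> (exp u / (1 + u)) ^ j"
    using expu[OF u0 u1] u0 by (intro power_mono) (simp_all add: divide_simps mult.commute)
  also have "\<dots> = exp (real j * u) * (1 / (1 + u)) ^ j"
    by (simp add: power_divide exp_of_nat_mult[symmetric])
  also have "\<dots> \<le> (lam*a/(lam*a - s*j))^a * (lam/(lam+s))^j"
    unfolding Deq using C u0 by (intro mult_right_mono) simp_all
  finally show ?thesis by (simp add: u_def)
qed


lemma exp_m1_bounds: "1/3 \<le> exp (-1::real)" "exp (-1::real) \<le> 1/2"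
proof -
  have e3: "exp (1::real) \<le> 3" by (rule exp_le)
  have e2: "2 \<le> exp (1::real)" using exp_ge_add_one_self[of "1::real"] by simp
  have "exp (-1::real) = 1 / exp 1" by (simp add: exp_minus divide_inverse)
  moreover have "1/3 \<le> 1 / exp (1::real)" using e3 by (intro frac_le) auto
  moreover have "1 / exp (1::real) \<le> 1/2" using e2 by (intro frac_le) auto
  ultimately show "1/3 \<le> exp (-1::real)" "exp (-1::real) \<le> 1/2" by simp_all
qed

lemma per_k:
  fixes \<eta> \<eta>' lam :: real and n m l k :: nat
  assumes e1: "0 < \<eta>'" "\<eta>' < 1/4" and e2: "0 < \<eta>" "\<eta> < \<eta>'" and lamd: "lam = exp(-1) + \<eta>"
   and l: "4 \<le> l" and path: "is_path n m vs" and m: "0 < m" and n: "0 < n"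
   and k: "2 \<le> k" "real k \<le> real m / (2 * real l)"
  shows "measure (Wn n) {w \<in> space (Wn n). lam + sqrt \<eta>' < LambdaK vs m l w k \<and> avgW vs m w \<le> lam}
    \<le> exp (-(real m * \<eta>' / 16)) * measure (Wn n) {w \<in> space (Wn n). avgW vs m w \<le> lam}"
proof -
  define a where "a = (k-1)*l"
  define j where "j = m - a"
  define s where "s = sqrt \<eta>'"
  define E where "E = {w \<in> space (Wn n). lam + sqrt \<eta>' < LambdaK vs m l w k \<and> avgW vs m w \<le> lam}"
  define F where "F = {w \<in> space (Wn n). avgW vs m w \<le> lam}"
  define x where "x = real m * \<eta>' / 16"
  have kl: "real k * real l * 2 \<le> real m" using k(2) l by (simp add: divide_simps mult.commute)
  have akl: "a + l = k * l" using k by (simp add: a_def algebra_simps)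
  hence "real a + real l = real k * real l" by (metis of_nat_add of_nat_mult)
  hence a2m: "2 * real a < real m" using kl l by linarith
  hence am: "a \<le> m" by linarith
  have a1: "1 \<le> a" using k l by (simp add: a_def)
  have jr: "real j = real m - real a" using am by (simp add: j_def)
  have j2: "real m \<le> 2 * real j" using a2m jr by linarith
  have j0: "0 < real j" using a2m jr by linarith
  have lam1: "1/3 \<le> lam" "lam \<le> 3/4" using exp_m1_bounds lamd e1 e2 by linarith+
  have lam0: "0 < lam" using lam1 by linarith
  have s0: "0 < s" using e1 by (simp add: s_def)
  have ss: "s * s = \<eta>'" using e1 by (simp add: s_def)
  have s1: "s \<le> 1/2"
  proof (rule ccontr)
    assume "\<not> s \<le> 1/2"
    hence "1/2 * (1/2) < s * s" using mult_strict_mono[of "1/2" s "1/2" s] by simp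
    thus False using ss e1 by simp
  qed
  have [measurable]: "(\<lambda>w. pathS vs w m) \<in> borel_measurable (Wn n)"
    unfolding Wn_eq by (rule pathS_meas[OF path]) simp
  have [measurable]: "(\<lambda>w. pathS vs w a) \<in> borel_measurable (Wn n)"
    unfolding Wn_eq by (rule pathS_meas[OF path am])
  have Em: "E \<in> sets (Wn n)"
    unfolding E_def LambdaK_def avgW_def a_def[symmetric] by measurable
  have key: "pathS vs w m \<le> lam * m \<and> (lam + s) * j < pathS vs w m - pathS vs w a" if "w \<in> E" for w
  proof
    have "pathS vs w m / m \<le> lam" using that by (simp add: E_def avgW_def)
    thus "pathS vs w m \<le> lam * m" using m by (simp add: divide_simps)
    have "lam + s < (pathS vs w m - pathS vs w a) / real j"
      using that jr by (simp add: E_def LambdaK_def a_def s_def)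
    thus "(lam + s) * j < pathS vs w m - pathS vs w a" using j0 by (simp add: divide_simps)
  qed
  have mja: "real m = real a + real j" using jr by simp
  have Sa_bd: "pathS vs w a < lam * a - s * j" if "w \<in> E" for w
    using key[OF that] mja by (simp add: algebra_simps)
  obtain C D where C: "0 < C" and D: "0 < D"
    and H: "\<And>w. w \<in> E \<Longrightarrow> (C-1) * pathS vs w a + (D-1) * (pathS vs w m - pathS vs w a) \<le> 0"
    and J: "exp x \<le> C^a * D^(m-a)"
  proof (cases "lam * a - s * j > 0")
    case True
    define C where "C = lam*a/(lam*a - s*j)"
    define D where "D = lam/(lam+s)"
    show ?thesis
    proof (rule that[of C D])
      show "0 < C" using True lam0 a1 by (simp add: C_def)
      show "0 < D" using lam0 s0 by (simp add: D_def)
      fix w assume w: "w \<in> E"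
      have C1: "C - 1 = s * j / (lam*a - s*j)" using True by (simp add: C_def divide_simps)
      have C1p: "0 \<le> C - 1" unfolding C1 using True s0 j0 by simp
      have "(C-1) * pathS vs w a \<le> (C-1) * (lam * a - s * j)"
        using Sa_bd[OF w] C1p by (intro mult_left_mono) auto
      also have "\<dots> = s * j" unfolding C1 using True by simp
      finally have h1: "(C-1) * pathS vs w a \<le> s * j" .
      have D1: "D - 1 = - (s / (lam + s))" using lam0 s0 by (simp add: D_def divide_simps)
      have "(D-1) * (pathS vs w m - pathS vs w a) \<le> (D-1) * ((lam + s) * j)"
        unfolding D1 using key[OF w] lam0 s0
        by (intro mult_left_mono_neg) (auto intro: less_imp_le)
      also have "\<dots> = - (s * j)" unfolding D1 using lam0 s0 by simp
      finally show "(C-1) * pathS vs w a + (D-1) * (pathS vs w m - pathS vs w a) \<le> 0" using h1 by simp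
    next
      have "exp (real j * (s/lam)\<^sup>2 / 10) \<le> C^a * D^j"
        unfolding C_def D_def by (rule J_bound[OF lam1(1) s0 s1 True])
      moreover have "x \<le> real j * (s/lam)\<^sup>2 / 10"
      proof -
        have "lam * lam \<le> 3/4 * (3/4)" using lam1 lam0 by (intro mult_mono) auto
        hence "\<eta>' * (16/9) \<le> \<eta>' / (lam * lam)" using e1 lam0 by (simp add: divide_simps)
        hence "\<eta>' * (16/9) \<le> (s/lam)\<^sup>2" by (simp add: power2_eq_square ss)
        hence "real m / 2 * (\<eta>' * (16/9)) \<le> real j * (s/lam)\<^sup>2"
          using j2 e1 by (intro mult_mono) auto
        moreover have "0 \<le> real m * \<eta>'" using e1 by simp
        ultimately show ?thesis unfolding x_def by linarith
      qed
      ultimately show "exp x \<le> C^a * D^(m-a)" using j_def by (meson exp_le_cancel_iff order_trans)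
    qed
  next
    case False
    define D where "D = lam/(lam+s)"
    define C where "C = exp x * (1/D)^j"
    have D0: "0 < D" "D \<le> 1" using lam0 s0 by (simp_all add: D_def)
    have C1: "1 \<le> C"
    proof -
      have "0 \<le> x" using e1 by (simp add: x_def)
      hence "1 \<le> exp x" by simp
      moreover have "1 \<le> (1/D)^j" using D0 by (intro one_le_power) simp
      ultimately show ?thesis unfolding C_def using mult_mono[of 1 "exp x" 1 "(1/D)^j"] by simp
    qed
    show ?thesis
    proof (rule that[of C D])
      show "0 < C" using C1 by simp
      show "0 < D" using D0 by simp
      fix w assume w: "w \<in> E"
      have "pathS vs w a < 0" using Sa_bd[OF w] False by simp
      hence h1: "(C-1) * pathS vs w a \<le> 0" using C1 by (simp add: mult_nonneg_nonpos)
      have "0 < pathS vs w m - pathS vs w a" using key[OF w] lam0 s0 j0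
        by (smt (verit) mult_pos_pos)
      hence "(D-1) * (pathS vs w m - pathS vs w a) \<le> 0" using D0 by (simp add: mult_nonpos_nonneg)
      thus "(C-1) * pathS vs w a + (D-1) * (pathS vs w m - pathS vs w a) \<le> 0" using h1 by simp
    next
      have "C \<le> C^a" using C1 a1 by (metis power_one_right power_increasing)
      hence "C * D^j \<le> C^a * D^j" using D0 by (simp add: mult_right_mono)
      moreover have "C * D^j = exp x" using D0 by (simp add: C_def power_one_over field_simps)
      ultimately show "exp x \<le> C^a * D^(m-a)" by (simp add: j_def)
    qed
  qed
  have "C^a * D^(m-a) * measure (Wn n) E \<le> measure (Wn n) F"
    unfolding F_def
  proof (rule path_scale[OF path m am n C D Em])
    fix w assume "w \<in> E"
    thus "w \<in> space (Wn n) \<and> avgW vs m w \<le> lam" by (simp add: E_def)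
    show "(C-1) * pathS vs w a + (D-1) * (pathS vs w m - pathS vs w a) \<le> 0" by (rule H) fact
  qed
  hence "exp x * measure (Wn n) E \<le> measure (Wn n) F"
    using J by (meson measure_nonneg mult_right_mono order_trans)
  hence "measure (Wn n) E \<le> exp (-x) * measure (Wn n) F"
    by (simp add: exp_minus divide_simps mult.commute)
  thus ?thesis by (simp add: E_def F_def x_def)
qed




lemma Ek_meas:
  assumes path: "is_path n m vs" and kl: "(k-1)*l \<le> m"
  shows "{w \<in> space (Wn n). lam + sqrt \<eta>' < LambdaK vs m l w k \<and> avgW vs m w \<le> lam} \<in> sets (Wn n)"
proof -
  have [measurable]: "(\<lambda>w. pathS vs w m) \<in> borel_measurable (Wn n)"
    unfolding Wn_eq by (rule pathS_meas[OF path]) simp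
  have [measurable]: "(\<lambda>w. pathS vs w ((k-1)*l)) \<in> borel_measurable (Wn n)"
    unfolding Wn_eq by (rule pathS_meas[OF path kl])
  show ?thesis unfolding LambdaK_def avgW_def by measurable
qed

lemma F_meas:
  assumes path: "is_path n m vs"
  shows "{w \<in> space (Wn n). avgW vs m w \<le> lam} \<in> sets (Wn n)"
proof -
  have [measurable]: "(\<lambda>w. pathS vs w m) \<in> borel_measurable (Wn n)"
    unfolding Wn_eq by (rule pathS_meas[OF path]) simp
  show ?thesis unfolding avgW_def by measurable
qed

lemma prob_space_Wn: "0 < n \<Longrightarrow> prob_space (Wn n)"
  unfolding Wn_eq by (rule prob_space_PiM) (simp add: prob_space_expM)

lemma Lambda1: "LambdaK vs m l w 1 = avgW vs m w"
  by (simp add: LambdaK_def avgW_def pathS_def)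

lemma path_m_le: "is_path n m vs \<Longrightarrow> m < n"
proof -
  assume p: "is_path n m vs"
  hence "card (set vs) = m + 1" by (simp add: is_path_def distinct_card)
  moreover have "set vs \<subseteq> {..<n}" using p by (auto simp: is_path_def)
  hence "card (set vs) \<le> n" using card_mono[of "{..<n}" "set vs"] by simp
  ultimately show ?thesis by simp
qed

theorem lemma2p4:
  fixes \<eta>' \<delta>0 :: real
  assumes "0 < \<eta>'" and "\<eta>' < 1/4" and "0 < \<delta>0" and "\<delta>0 < 1"
  shows "\<exists>ns::nat. 0 < ns \<and>
    (\<forall>(\<eta>::real) (n::nat) (\<delta>::real) (m::nat) (vs::nat list).
       0 < \<eta> \<longrightarrow> \<eta> < \<eta>' \<longrightarrow> ns \<le> n \<longrightarrow> \<delta>0 \<le> \<delta> \<longrightarrow>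
       0 < m \<longrightarrow> real m = \<delta> * real n \<longrightarrow> is_path n m vs \<longrightarrow>
       (let lam = exp (-1) + \<eta>; l = nat \<lfloor>1 / \<eta>'\<rfloor> in
        cond_prob (Wn n)
          (\<lambda>w. \<exists>k::nat. 1 \<le> k \<and> real k \<le> real m / (2 * real l) \<and>
                 LambdaK vs m l w k > lam + sqrt \<eta>')
          (\<lambda>w. avgW vs m w \<le> lam)
        \<le> 2 * real n * exp (- \<delta> * real n * \<eta>' / 16)))"
proof (intro exI[of _ 1] conjI allI impI)
  show "0 < (1::nat)" by simp
  fix \<eta> :: real and n :: nat and \<delta> :: real and m :: nat and vs :: "nat list"
  assume e2: "0 < \<eta>" "\<eta> < \<eta>'" and n1: "1 \<le> n" and "\<delta>0 \<le> \<delta>" and m: "0 < m"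
    and md: "real m = \<delta> * real n" and path: "is_path n m vs"
  define lam where "lam = exp (-1) + \<eta>"
  define l where "l = nat \<lfloor>1 / \<eta>'\<rfloor>"
  define x where "x = real m * \<eta>' / 16"
  define W where "W = Wn n"
  define F where "F = {w \<in> space W. avgW vs m w \<le> lam}"
  define E where "E k = {w \<in> space W. lam + sqrt \<eta>' < LambdaK vs m l w k \<and> avgW vs m w \<le> lam}" for k
  define K where "K = nat \<lfloor>real m / (2 * real l)\<rfloor>"
  define S where "S = {w \<in> space W. (\<exists>k::nat. 1 \<le> k \<and> real k \<le> real m / (2 * real l) \<and>
                 LambdaK vs m l w k > lam + sqrt \<eta>') \<and> avgW vs m w \<le> lam}"
  have n: "0 < n" using n1 by simp
  interpret P: prob_space W unfolding W_def by (rule prob_space_Wn[OF n])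
  have l4: "4 \<le> l"
  proof -
    have "4 < 1 / \<eta>'" using assms by (simp add: divide_simps)
    hence h: "(4::int) \<le> \<lfloor>1 / \<eta>'\<rfloor>" by (simp add: le_floor_iff)
    have "nat 4 \<le> nat \<lfloor>1 / \<eta>'\<rfloor>" by (rule nat_mono[OF h])
    thus ?thesis by (simp add: l_def)
  qed
  have l0: "0 < real l" using l4 by simp
  have Kle: "real k \<le> real m / (2 * real l) \<longleftrightarrow> k \<le> K" for k
  proof
    assume "real k \<le> real m / (2 * real l)" thus "k \<le> K" unfolding K_def by (rule le_nat_floor)
  next
    assume h: "k \<le> K"
    have a0: "0 \<le> real m / (2 * real l)" by simp
    have "real k \<le> real K" using h by simp
    also have "real K = of_int \<lfloor>real m / (2 * real l)\<rfloor>" unfolding K_def using a0 by simp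
    also have "\<dots> \<le> real m / (2 * real l)" by (rule of_int_floor_le)
    finally show "real k \<le> real m / (2 * real l)" .
  qed
  have kl_m: "(k-1)*l \<le> m" if "k \<le> K" for k
  proof -
    have "real k * (2 * real l) \<le> real m" using Kle[of k] that l0 by (simp add: divide_simps)
    hence "real (k * l) \<le> real m" using l0 by (simp add: algebra_simps)
    hence "k * l \<le> m" by linarith
    moreover have "(k-1)*l \<le> k * l" by simp
    ultimately show ?thesis by linarith
  qed
  have SE: "S \<subseteq> (\<Union>k\<in>{2..K}. E k)"
  proof
    fix w assume "w \<in> S"
    then obtain k where w: "w \<in> space W" "1 \<le> k" "real k \<le> real m / (2 * real l)"
      "LambdaK vs m l w k > lam + sqrt \<eta>'" "avgW vs m w \<le> lam" by (auto simp: S_def)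
    have "k \<noteq> 1"
    proof
      assume "k = 1"
      hence "LambdaK vs m l w k = avgW vs m w" using Lambda1 by metis
      moreover have "0 < sqrt \<eta>'" using assms(1) by simp
      ultimately show False using w(4,5) by linarith
    qed
    hence "k \<in> {2..K}" using w(2,3) Kle by auto
    thus "w \<in> (\<Union>k\<in>{2..K}. E k)" using w by (auto simp: E_def)
  qed
  have Em: "E k \<in> sets W" if "k \<in> {2..K}" for k
    unfolding E_def W_def by (rule Ek_meas[OF path kl_m]) (use that in auto)
  have Fm: "F \<in> sets W" unfolding F_def W_def by (rule F_meas[OF path])
  have Ebd: "measure W (E k) \<le> exp (-x) * measure W F" if "k \<in> {2..K}" for k
    unfolding E_def F_def W_def x_def
    by (rule per_k[OF assms(1,2) e2 lam_def l4 path m n]) (use that Kle in auto)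
  have "measure W S \<le> measure W (\<Union>k\<in>{2..K}. E k)"
    using SE Em by (intro P.finite_measure_mono) auto
  also have "\<dots> \<le> (\<Sum>k\<in>{2..K}. measure W (E k))"
    using Em by (intro measure_UNION_le) auto
  also have "\<dots> \<le> (\<Sum>k\<in>{2..K}. exp (-x) * measure W F)"
    using Ebd by (rule sum_mono)
  also have "\<dots> = real (card {2..K}) * (exp (-x) * measure W F)" by simp
  also have "\<dots> \<le> real n * (exp (-x) * measure W F)"
  proof (rule mult_right_mono)
    have "real K \<le> real m / (2 * real l)" using Kle by simp
    also have "\<dots> \<le> real m"
    proof -
      have "1 \<le> 2 * real l" using l4 by simp
      hence "real m * 1 \<le> real m * (2 * real l)" by (intro mult_left_mono) auto
      thus ?thesis using l0 by (simp add: divide_simps)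
    qed
    finally have "K \<le> m" by simp
    hence "card {2..K} \<le> n" using path_m_le[OF path] by simp
    thus "real (card {2..K}) \<le> real n" by simp
  qed simp
  finally have SF: "measure W S \<le> real n * exp (-x) * measure W F" by simp
  have goal: "measure W S / measure W F \<le> 2 * real n * exp (-x)"
  proof (cases "measure W F = 0")
    case True thus ?thesis by simp
  next
    case False
    hence "0 < measure W F" using measure_nonneg[of W F] by linarith
    hence "measure W S / measure W F \<le> real n * exp (-x)" using SF by (simp add: divide_simps)
    also have "\<dots> \<le> 2 * real n * exp (-x)" by simp
    finally show ?thesis .
  qed
  have xeq: "- \<delta> * real n * \<eta>' / 16 = -x" by (simp add: x_def md)
  have "cond_prob W
          (\<lambda>w. \<exists>k::nat. 1 \<le> k \<and> real k \<le> real m / (2 * real l) \<and>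
                 LambdaK vs m l w k > lam + sqrt \<eta>')
          (\<lambda>w. avgW vs m w \<le> lam) = measure W S / measure W F"
    by (simp add: cond_prob_def S_def F_def)
  thus "let lam = exp (-1) + \<eta>; l = nat \<lfloor>1 / \<eta>'\<rfloor> in
        cond_prob (Wn n)
          (\<lambda>w. \<exists>k::nat. 1 \<le> k \<and> real k \<le> real m / (2 * real l) \<and>
                 LambdaK vs m l w k > lam + sqrt \<eta>')
          (\<lambda>w. avgW vs m w \<le> lam)
        \<le> 2 * real n * exp (- \<delta> * real n * \<eta>' / 16)"
    using goal xeq by (simp add: Let_def lam_def[symmetric] l_def[symmetric] W_def)
qed


end
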